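(* Let $\mathbf w=\mathbf w^{H,\mathbf S_r}_{\mathbf b}$ be a binary subspace chirp of rank $r$ with parameters $H\in\mathcal G(m,r;2)$, $\mathbf S_r\in\mathrm{Sym}(r;2)$, $\mathbf b\in\mathbb F_2^m$. For $\mathbf x,\mathbf y\in\mathbb F_2^m$ we have $\mathbf w^\dagger\mathbf E(\mathbf x,\mathbf y)\mathbf w\neq0$ if and only if $\mathbf x\in H$ and, writing $\mathbf x=\mathbf H_{\mathcal I}\mathbf z$ with $\mathbf z\in\mathbb F_2^r$, one has $\mathbf H_{\mathcal I}^T\mathbf y=\mathbf S_r\mathbf z$; equivalently $\mathbf y\in\{\tilde{\mathbf H}_{\mathcal I}\mathbf v+\mathbf I_{\mathcal I}\mathbf S_r\mathbf z:\mathbf v\in\mathbb F_2^{m-r}\}$. In particular $\mathbf w^\dagger\mathbf E(\mathbf 0,\mathbf y)\mathbf w\neq0$ if and only if $\mathbf y$ lies in the column space of $\tilde{\mathbf H}_{\mathcal I}$, which equals $H^{\perp}=\{\mathbf y:\mathbf y^T\mathbf h=0\ \forall\mathbf h\in H\}$.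
   Context: Fix $m\ge1$, $N=2^m$. Binary vectors are columns over $\mathbb F_2$; $\mathrm{Sym}(r;2)$ is the set of symmetric binary $r\times r$ matrices, $\mathcal G(m,r;2)$ the set of $r$-dimensional subspaces of $\mathbb F_2^m$. The standard basis of $\mathbb C^N=(\mathbb C^2)^{\otimes m}$ is $\{\mathbf e_{\mathbf v}=\mathbf e_{v_1}\otimes\cdots\otimes\mathbf e_{v_m}:\mathbf v\in\mathbb F_2^m\}$ and vectors of $\mathbb C^N$ are indexed by $\mathbb F_2^m$; $\dagger$ is conjugate transpose. Whenever a binary expression appears in an exponent of $i$, binary entries are lifted to the integers $0,1$ and the expression is evaluated in $\mathbb Z$ (equivalently mod 4). Pauli matrices: $\sigma_x=\begin{pmatrix}0&1\\1&0\end{pmatrix}$, $\sigma_z=\begin{pmatrix}1&0\\0&-1\end{pmatrix}$; for $\mathbf a,\mathbf b\in\mathbb F_2^m$, $\mathbf D(\mathbf a,\mathbf b)=\sigma_x^{a_1}\sigma_z^{b_1}\otimes\cdots\otimes\sigma_x^{a_m}\sigma_z^{b_m}$ and $\mathbf E(\mathbf a,\mathbf b)=i^{\mathbf a^T\mathbf b}\mathbf D(\mathbf a,\mathbf b)$. Echelon data: for $0\le r\le m$ and $H\in\mathcal G(m,r;2)$, let $\mathbf H_{\mathcal I}$ be the unique $m\times r$ binary matrix in column reduced echelon form with column space $H$: there are indices $i_1<\dots<i_r$, $\mathcal I=\{i_1,\dots,i_r\}$, such that rows $i_1,\dots,i_r$ of $\mathbf H_{\mathcal I}$ form $\mathbf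 I_r$ and column $j$ of $\mathbf H_{\mathcal I}$ is zero in all rows above row $i_j$. Let $\mathbf I_{\mathcal I}$ (resp. $\mathbf I_{\tilde{\mathcal I}}$) be the $m\times r$ (resp. $m\times(m-r)$) matrix whose columns are the standard basis vectors $\mathbf e_i$ with $i\in\mathcal I$ (resp. $i\notin\mathcal I$), in increasing order of $i$. Put $\mathbf P_{\mathcal I}=[\mathbf H_{\mathcal I}\ \ \mathbf I_{\tilde{\mathcal I}}]\in\mathrm{GL}(m;2)$, and define the $m\times(m-r)$ matrix $\tilde{\mathbf H}_{\mathcal I}$ by $\mathbf P_{\mathcal I}^{-T}=[\mathbf I_{\mathcal I}\ \ \tilde{\mathbf H}_{\mathcal I}]$. (For $r=0$: $H=\{0\}$, $\mathbf P_{\mathcal I}=\mathbf I_m$.) For $\mathbf S_r\in\mathrm{Sym}(r;2)$, $\tilde{\mathbf S}_r\in\mathrm{Sym}(m;2)$ denotes the matrix with $\mathbf S_r$ as its upper-left $r\times r$ block and zeros elsewhere. Binary subspace chirps: let $f(\mathbf v,\mathbf w,r)=\prod_{i=r+1}^m(1+v_i+w_i)$ computed in $\mathbb F_2$ and viewed in $\{0,1\}$ (so $f=1$ iff $\mathbf v,\mathbf w$ agree in their last $m-r$ coordinates). For $\mathbf b\in\mathbb F_2^m$, the binary subspace chirp (BSSC) $\mathbf w_{\mathbf b}=\mathbf w^{H,\mathbf S_r}_{\mathbf b}\in\mathbb C^N$ has entries $\mathbf w_{\mathbf b}(\mathbf a)=2^{-r/2}\,i^{\mathbf u^T\tilde{\mathbf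 S}_r\mathbf u+2\mathbf b^T\mathbf u}\,f(\mathbf b,\mathbf u,r)$ with $\mathbf u=\mathbf P_{\mathcal I}^{-1}\mathbf a\in\mathbb F_2^m$, for $\mathbf a\in\mathbb F_2^m$. The integer $r$ is its rank. *)

theory Defs
  imports Complex_Main "HOL-Library.Z2"
begin

(* Indices are 0-based:
   a vector of F_2^n is a function nat => bit vanishing outside {0..<n};
   an n x k matrix is a function nat => nat => bit (row, column). *)

definition vecs :: "nat \<Rightarrow> (nat \<Rightarrow> bit) set" where
  "vecs n = {v. \<forall>i\<ge>n. v i = 0}"

definition lift :: "bit \<Rightarrow> nat" where
  "lift b = (if b = 1 then 1 else 0)"

definition mvec :: "nat \<Rightarrow> nat \<Rightarrow> (nat \<Rightarrow> nat \<Rightarrow> bit) \<Rightarrow> (nat \<Rightarrow> bit) \<Rightarrow> (nat \<Rightarrow> bit)" where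
  "mvec n k M z = (\<lambda>i. if i < n then (\<Sum>j<k. M i j * z j) else 0)"

definition vadd :: "(nat \<Rightarrow> bit) \<Rightarrow> (nat \<Rightarrow> bit) \<Rightarrow> (nat \<Rightarrow> bit)" where
  "vadd u v = (\<lambda>i. u i + v i)"

definition mtrans :: "(nat \<Rightarrow> nat \<Rightarrow> bit) \<Rightarrow> (nat \<Rightarrow> nat \<Rightarrow> bit)" where
  "mtrans M = (\<lambda>i j. M j i)"

definition mmul :: "nat \<Rightarrow> nat \<Rightarrow> nat \<Rightarrow> (nat \<Rightarrow> nat \<Rightarrow> bit) \<Rightarrow> (nat \<Rightarrow> nat \<Rightarrow> bit) \<Rightarrow> (nat \<Rightarrow> nat \<Rightarrow> bit)" where
  "mmul n k l A B = (\<lambda>i j. if i < n \<and> j < l then (\<Sum>t<k. A i t * B t j) else 0)"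

definition idm :: "nat \<Rightarrow> (nat \<Rightarrow> nat \<Rightarrow> bit)" where
  "idm n = (\<lambda>i j. if i < n \<and> i = j then 1 else 0)"

definition is_mat :: "nat \<Rightarrow> nat \<Rightarrow> (nat \<Rightarrow> nat \<Rightarrow> bit) \<Rightarrow> bool" where
  "is_mat n k M \<longleftrightarrow> (\<forall>i j. (n \<le> i \<or> k \<le> j) \<longrightarrow> M i j = 0)"

definition minv :: "nat \<Rightarrow> (nat \<Rightarrow> nat \<Rightarrow> bit) \<Rightarrow> (nat \<Rightarrow> nat \<Rightarrow> bit)" where
  "minv n A = (THE B. is_mat n n B \<and> mmul n n n A B = idm n \<and> mmul n n n B A = idm n)"

definition colspace :: "nat \<Rightarrow> nat \<Rightarrow> (nat \<Rightarrow> nat \<Rightarrow> bit) \<Rightarrow> (nat \<Rightarrow> bit) set" where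
  "colspace n k M = mvec n k M ` vecs k"

definition bdot :: "nat \<Rightarrow> (nat \<Rightarrow> bit) \<Rightarrow> (nat \<Rightarrow> bit) \<Rightarrow> bit" where
  "bdot n u v = (\<Sum>i<n. u i * v i)"

definition perp :: "nat \<Rightarrow> (nat \<Rightarrow> bit) set \<Rightarrow> (nat \<Rightarrow> bit) set" where
  "perp m H = {y \<in> vecs m. \<forall>h\<in>H. bdot m y h = 0}"

(* M is an m x r binary matrix in column reduced echelon form with pivot rows
   piv 0 < ... < piv (r-1) (0-based version of i_1 < ... < i_r) *)
definition cref :: "nat \<Rightarrow> nat \<Rightarrow> (nat \<Rightarrow> nat \<Rightarrow> bit) \<Rightarrow> (nat \<Rightarrow> nat) \<Rightarrow> bool" where
  "cref m r M piv \<longleftrightarrow> is_mat m r M \<and> r \<le> m \<and>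
     (\<forall>j<r. piv j < m) \<and> (\<forall>j k. j < k \<and> k < r \<longrightarrow> piv j < piv k) \<and>
     (\<forall>j<r. \<forall>k<r. M (piv j) k = (if j = k then 1 else 0)) \<and>
     (\<forall>j<r. \<forall>i<piv j. M i j = 0)"

definition nonpiv :: "nat \<Rightarrow> nat \<Rightarrow> (nat \<Rightarrow> nat) \<Rightarrow> nat \<Rightarrow> nat" where
  "nonpiv m r piv k = sorted_list_of_set ({0..<m} - piv ` {0..<r}) ! k"

definition IImat :: "nat \<Rightarrow> nat \<Rightarrow> (nat \<Rightarrow> nat) \<Rightarrow> (nat \<Rightarrow> nat \<Rightarrow> bit)" where
  "IImat m r piv = (\<lambda>i j. if i < m \<and> j < r \<and> i = piv j then 1 else 0)"

(* P_I = [H_I  I_{~I}] *)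
definition Pmat :: "nat \<Rightarrow> nat \<Rightarrow> (nat \<Rightarrow> nat \<Rightarrow> bit) \<Rightarrow> (nat \<Rightarrow> nat) \<Rightarrow> (nat \<Rightarrow> nat \<Rightarrow> bit)" where
  "Pmat m r M piv = (\<lambda>i j. if i < m \<and> j < m then
       (if j < r then M i j else (if i = nonpiv m r piv (j - r) then 1 else 0)) else 0)"

definition Htil :: "nat \<Rightarrow> nat \<Rightarrow> (nat \<Rightarrow> nat \<Rightarrow> bit) \<Rightarrow> (nat \<Rightarrow> nat) \<Rightarrow> (nat \<Rightarrow> nat \<Rightarrow> bit)" where
  "Htil m r M piv = (\<lambda>i j. if i < m \<and> j < m - r then
       mtrans (minv m (Pmat m r M piv)) i (r + j) else 0)"

definition fagree :: "nat \<Rightarrow> (nat \<Rightarrow> bit) \<Rightarrow> (nat \<Rightarrow> bit) \<Rightarrow> nat \<Rightarrow> complex" where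
  "fagree m v w r = (if \<forall>i. r \<le> i \<and> i < m \<longrightarrow> v i = w i then 1 else 0)"

definition bssc :: "nat \<Rightarrow> nat \<Rightarrow> (nat \<Rightarrow> nat \<Rightarrow> bit) \<Rightarrow> (nat \<Rightarrow> nat) \<Rightarrow> (nat \<Rightarrow> nat \<Rightarrow> bit)
                    \<Rightarrow> (nat \<Rightarrow> bit) \<Rightarrow> (nat \<Rightarrow> bit) \<Rightarrow> complex" where
  "bssc m r M piv S b a =
     (let u = mvec m m (minv m (Pmat m r M piv)) a in
      complex_of_real (2 powr (- real r / 2)) *
      \<i> ^ ((\<Sum>j<r. \<Sum>k<r. lift (u j) * lift (S j k) * lift (u k)) + 2 * (\<Sum>j<m. lift (b j) * lift (u j))) *
      fagree m b u r)"

definition sigx :: "bit \<Rightarrow> bit \<Rightarrow> complex" where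
  "sigx u v = (if u \<noteq> v then 1 else 0)"
definition sigz :: "bit \<Rightarrow> bit \<Rightarrow> complex" where
  "sigz u v = (if u = v then (if u = 0 then 1 else -1) else 0)"
definition id2 :: "bit \<Rightarrow> bit \<Rightarrow> complex" where
  "id2 u v = (if u = v then 1 else 0)"
definition mult2 :: "(bit \<Rightarrow> bit \<Rightarrow> complex) \<Rightarrow> (bit \<Rightarrow> bit \<Rightarrow> complex) \<Rightarrow> (bit \<Rightarrow> bit \<Rightarrow> complex)" where
  "mult2 A B = (\<lambda>u v. A u 0 * B 0 v + A u 1 * B 1 v)"

definition pauli1 :: "bit \<Rightarrow> bit \<Rightarrow> (bit \<Rightarrow> bit \<Rightarrow> complex)" where
  "pauli1 a b = mult2 (if a = 1 then sigx else id2) (if b = 1 then sigz else id2)"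

(* D(a,b) = tensor product, entry (u,v) = prod_i (factor_i)_{u_i, v_i} *)
definition Dmat :: "nat \<Rightarrow> (nat \<Rightarrow> bit) \<Rightarrow> (nat \<Rightarrow> bit) \<Rightarrow> (nat \<Rightarrow> bit) \<Rightarrow> (nat \<Rightarrow> bit) \<Rightarrow> complex" where
  "Dmat m a b u v = (\<Prod>i<m. pauli1 (a i) (b i) (u i) (v i))"

definition Emat :: "nat \<Rightarrow> (nat \<Rightarrow> bit) \<Rightarrow> (nat \<Rightarrow> bit) \<Rightarrow> (nat \<Rightarrow> bit) \<Rightarrow> (nat \<Rightarrow> bit) \<Rightarrow> complex" where
  "Emat m a b u v = \<i> ^ (\<Sum>i<m. lift (a i) * lift (b i)) * Dmat m a b u v"

definition qform :: "nat \<Rightarrow> ((nat \<Rightarrow> bit) \<Rightarrow> complex) \<Rightarrow> ((nat \<Rightarrow> bit) \<Rightarrow> (nat \<Rightarrow> bit) \<Rightarrow> complex) \<Rightarrow> complex" where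
  "qform m w A = (\<Sum>u\<in>vecs m. cnj (w u) * (\<Sum>v\<in>vecs m. A u v * w v))"

end

theory Submission
  imports Defs
begin

declare add_bit_eq_xor[simp del] mult_bit_eq_and[simp del]

lemma bit_add_self[simp]: "(x::bit) + x = 0" by (cases x) simp_all
lemma UNIV_bit: "(UNIV::bit set) = {0,1}" by (auto intro: bit.exhaust)

lemma lift_add: "int (lift (a+b)) = int (lift a) + int (lift b) - 2*int(lift a)*int(lift b)"
  by (cases a; cases b) (simp_all add: lift_def)
lemma lift_mult: "lift (a*b) = lift a * lift b"
  by (cases a; cases b) (simp_all add: lift_def)
lemma lift_le1: "lift a \<le> 1" by (simp add: lift_def)

definition sb :: "bit \<Rightarrow> complex" where "sb t = (if t = 1 then -1 else 1)"
lemma sb_add: "sb (a+b) = sb a * sb b"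
  by (cases a; cases b) (simp_all add: sb_def)
lemma sb_0[simp]: "sb 0 = 1" by (simp add: sb_def)
lemma sb_1[simp]: "sb 1 = -1" by (simp add: sb_def)
lemma sb_sum: "finite A \<Longrightarrow> sb (\<Sum>j\<in>A. f j) = (\<Prod>j\<in>A. sb (f j))"
  by (induction A rule: finite_induct) (simp_all add: sb_add)
lemma neg1_lift: "(-1::complex) ^ lift a = sb a"
  by (cases a) (simp_all add: lift_def)
lemma neg1_sum_lift: "(-1::complex) ^ (\<Sum>j\<in>A. lift (f j)) = (\<Prod>j\<in>A. sb (f j))"
  by (simp add: power_sum neg1_lift)
lemma sb_sq[simp]: "sb a * sb a = 1" by (cases a) simp_all
lemma sb_ne0[simp]: "sb a \<noteq> 0" by (cases a) simp_all

lemma vecs_0: "vecs 0 = {\<lambda>_. 0}" by (auto simp: vecs_def)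
lemma vecs_Suc: "vecs (Suc n) = (\<lambda>(v,t). v(n:=t)) ` (vecs n \<times> UNIV)"
proof (rule set_eqI, rule iffI)
  fix c assume c: "c \<in> vecs (Suc n)"
  have "c(n:=0) \<in> vecs n" using c by (auto simp: vecs_def)
  then show "c \<in> (\<lambda>(v,t). v(n:=t)) ` (vecs n \<times> UNIV)"
    by (intro image_eqI[where x="(c(n:=0), c n)"]) auto
qed (auto simp: vecs_def)
lemma vecs_Suc_inj: "inj_on (\<lambda>(v,t). v(n:=t)) (vecs n \<times> UNIV)"
proof (rule inj_onI, clarify)
  fix v t v' t' assume v: "v \<in> vecs n" "v' \<in> vecs n" and e: "v(n:=t) = v'(n:=t')"
  have "t = t'" using fun_cong[OF e, of n] by simp
  moreover have "v i = v' i" for i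
  proof (cases "i = n")
    case True then show ?thesis using v by (simp add: vecs_def)
  next
    case False then show ?thesis using fun_cong[OF e, of i] by simp
  qed
  ultimately show "v = v' \<and> t = t'" by auto
qed
lemma finite_bit[simp]: "finite (UNIV::bit set)" by (simp add: UNIV_bit)
lemma prod_upd: "(\<Prod>j<Suc n. f j ((v(n:=t)) j)) = (\<Prod>j<n. f j (v j)) * f n t"
  by (simp add: prod.lessThan_Suc)
lemma vecs_finite: "finite (vecs n)"
  by (induction n) (simp_all add: vecs_0 vecs_Suc)

lemma sum_prod_vecs:
  fixes f :: "nat \<Rightarrow> bit \<Rightarrow> 'a::comm_ring_1"
  shows "(\<Sum>c\<in>vecs n. \<Prod>j<n. f j (c j)) = (\<Prod>j<n. f j 0 + f j 1)"
proof (induction n)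
  case 0 then show ?case by (simp add: vecs_0)
next
  case (Suc n)
  have "(\<Sum>c\<in>vecs (Suc n). \<Prod>j<Suc n. f j (c j))
      = (\<Sum>x\<in>vecs n \<times> UNIV. (\<lambda>c. \<Prod>j<Suc n. f j (c j)) ((\<lambda>(v,t). v(n:=t)) x))"
    unfolding vecs_Suc by (rule sum.reindex[OF vecs_Suc_inj, unfolded comp_def])
  also have "\<dots> = (\<Sum>v\<in>vecs n. \<Sum>t\<in>UNIV. (\<Prod>j<n. f j (v j)) * f n t)"
    by (simp add: sum.cartesian_product case_prod_beta prod_upd)
  also have "\<dots> = (\<Sum>v\<in>vecs n. (\<Prod>j<n. f j (v j))) * (f n 0 + f n 1)"
    by (simp add: UNIV_bit sum_distrib_right sum_distrib_left algebra_simps)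
  finally show ?case using Suc by simp
qed

lemma mvec_in[simp]: "mvec n k A v \<in> vecs n" by (simp add: vecs_def mvec_def)
lemma vadd_in: "u \<in> vecs n \<Longrightarrow> v \<in> vecs n \<Longrightarrow> vadd u v \<in> vecs n"
  by (simp add: vecs_def vadd_def)
lemma vecs_mono: "v \<in> vecs r \<Longrightarrow> r \<le> m \<Longrightarrow> v \<in> vecs m"
  by (simp add: vecs_def)
lemma mvec_vadd: "mvec n k A (vadd u v) = vadd (mvec n k A u) (mvec n k A v)"
  by (auto simp: mvec_def vadd_def fun_eq_iff distrib_left sum.distrib)

lemma mvec_mmul: "mvec n k A (mvec k l B v) = mvec n l (mmul n k l A B) v"
proof -
  have "(\<Sum>t<k. A i t * (if t < k then \<Sum>s<l. B t s * v s else 0))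
      = (\<Sum>s<l. (\<Sum>t<k. A i t * B t s) * v s)" for i
  proof -
    have "(\<Sum>t<k. A i t * (if t < k then \<Sum>s<l. B t s * v s else 0))
       = (\<Sum>t<k. \<Sum>s<l. A i t * B t s * v s)"
      by (rule sum.cong) (auto simp: sum_distrib_left mult.assoc)
    also have "\<dots> = (\<Sum>s<l. \<Sum>t<k. A i t * B t s * v s)" by (rule sum.swap)
    also have "\<dots> = (\<Sum>s<l. (\<Sum>t<k. A i t * B t s) * v s)"
      by (simp add: sum_distrib_right)
    finally show ?thesis .
  qed
  then show ?thesis
    by (auto simp: mvec_def mmul_def fun_eq_iff intro!: sum.cong)
qed

lemma mvec_idm: "v \<in> vecs n \<Longrightarrow> mvec n n (idm n) v = v"
proof (rule ext)
  fix i assume v: "v \<in> vecs n"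
  have "(\<Sum>j<n. idm n i j * v j) = (\<Sum>j<n. if i = j then v j else 0)" if "i < n"
    using that by (intro sum.cong) (auto simp: idm_def)
  then show "mvec n n (idm n) v i = v i" using v by (auto simp: mvec_def vecs_def)
qed

definition ev :: "nat \<Rightarrow> nat \<Rightarrow> bit" where "ev j = (\<lambda>t. if t = j then 1 else 0)"
lemma ev_in: "j < n \<Longrightarrow> ev j \<in> vecs n" by (simp add: ev_def vecs_def)
lemma mvec_ev: "mvec n k C (ev j) i = (if i < n \<and> j < k then C i j else 0)"
  by (simp add: mvec_def ev_def if_distrib cong: if_cong)

lemma mat_eq:
  assumes "is_mat n k C" "is_mat n k D" "\<And>j. j < k \<Longrightarrow> mvec n k C (ev j) = mvec n k D (ev j)"
  shows "C = D"
proof (rule ext, rule ext)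
  fix i j show "C i j = D i j"
  proof (cases "i < n \<and> j < k")
    case True then show ?thesis using fun_cong[OF assms(3)[of j], of i] by (simp add: mvec_ev)
  next
    case False then show ?thesis using assms(1,2) by (auto simp: is_mat_def)
  qed
qed

lemma is_mat_mmul: "is_mat n l (mmul n k l A B)" by (simp add: is_mat_def mmul_def)
lemma is_mat_idm: "is_mat n n (idm n)" by (simp add: is_mat_def idm_def)

lemma mtrans_mmul: "mtrans (mmul n k l A B) = mmul l k n (mtrans B) (mtrans A)"
  by (auto simp: mtrans_def mmul_def fun_eq_iff mult.commute)
lemma mtrans_idm: "mtrans (idm n) = idm n"
  by (auto simp: mtrans_def idm_def fun_eq_iff)

lemma inv_vec:
  assumes "mmul n n n A B = idm n" "v \<in> vecs n"
  shows "mvec n n A (mvec n n B v) = v"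
  using assms by (simp add: mvec_mmul mvec_idm)

lemma minv_eq:
  assumes "is_mat n n Q" "mmul n n n A Q = idm n" "mmul n n n Q A = idm n"
  shows "minv n A = Q"
  unfolding minv_def
proof (rule the_equality)
  show "is_mat n n Q \<and> mmul n n n A Q = idm n \<and> mmul n n n Q A = idm n" using assms by simp
next
  fix B assume B: "is_mat n n B \<and> mmul n n n A B = idm n \<and> mmul n n n B A = idm n"
  show "B = Q"
  proof (rule mat_eq[of n n])
    show "is_mat n n B" "is_mat n n Q" using B assms by auto
    fix j assume j: "j < n"
    have "mvec n n Q (ev j) = mvec n n B (mvec n n A (mvec n n Q (ev j)))"
      using B by (simp add: inv_vec)
    also have "\<dots> = mvec n n B (ev j)" using assms(2) j by (simp add: inv_vec ev_in)
    finally show "mvec n n B (ev j) = mvec n n Q (ev j)" by simp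
  qed
qed

lemma ite10_mult[simp]: "(if P then 1 else 0) * (x::'a::semiring_1) = (if P then x else 0)" by simp
lemma mult_ite10[simp]: "(x::'a::semiring_1) * (if P then 1 else 0) = (if P then x else 0)" by simp
lemma sum_split_r: "(r::nat) \<le> m \<Longrightarrow> (\<Sum>j<m. g j) = (\<Sum>j<r. g j) + (\<Sum>k<m-r. g (r+k))"
proof -
  assume rm: "r \<le> m"
  have "(\<Sum>j<m. g j) = sum g {0..<r} + sum g {r..<m}"
    using rm by (simp add: lessThan_atLeast0 sum.atLeastLessThan_concat)
  moreover have "sum g {r..<m} = sum (\<lambda>k. g (k + r)) {0..<m-r}"
    using sum.shift_bounds_nat_ivl[of g 0 r "m-r"] rm by simp
  ultimately show ?thesis by (simp add: lessThan_atLeast0 add.commute)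
qed
locale bsetup =
  fixes m r :: nat and M :: "nat \<Rightarrow> nat \<Rightarrow> bit" and piv :: "nat \<Rightarrow> nat"
  assumes cr: "cref m r M piv"
begin

lemma r_le: "r \<le> m" using cr by (simp add: cref_def)
lemma piv_lt: "j < r \<Longrightarrow> piv j < m" using cr by (simp add: cref_def)
lemma M_piv: "j < r \<Longrightarrow> k < r \<Longrightarrow> M (piv j) k = (if j = k then 1 else 0)"
  using cr by (simp add: cref_def)
lemma M_mat: "is_mat m r M" using cr by (simp add: cref_def)
lemma piv_inj: "j < r \<Longrightarrow> k < r \<Longrightarrow> piv j = piv k \<Longrightarrow> j = k"
  using cr unfolding cref_def by (metis less_irrefl linorder_neqE_nat)
lemma piv_inj_on: "inj_on piv {0..<r}" by (auto intro!: inj_onI piv_inj)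

definition NP where "NP = {0..<m} - piv ` {0..<r}"
definition ncol where "ncol k = nonpiv m r piv k"

lemma NP_card: "card NP = m - r"
proof -
  have "piv ` {0..<r} \<subseteq> {0..<m}" using piv_lt by auto
  then have "card NP = m - card (piv ` {0..<r})" unfolding NP_def
    by (simp add: card_Diff_subset finite_subset)
  then show ?thesis using piv_inj_on by (simp add: card_image)
qed

lemma L_props: "length (sorted_list_of_set NP) = m - r" "distinct (sorted_list_of_set NP)"
  "set (sorted_list_of_set NP) = NP"
  using NP_card by (auto simp: NP_def)

lemma ncol_NP: "k < m - r \<Longrightarrow> ncol k \<in> NP"
  using L_props unfolding ncol_def nonpiv_def NP_def[symmetric] by (metis nth_mem)
lemma ncol_lt: "k < m - r \<Longrightarrow> ncol k < m" using ncol_NP by (auto simp: NP_def)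
lemma ncol_notpiv: "k < m - r \<Longrightarrow> j < r \<Longrightarrow> ncol k \<noteq> piv j"
  using ncol_NP[of k] by (fastforce simp: NP_def)
lemma ncol_inj: "k < m - r \<Longrightarrow> k' < m - r \<Longrightarrow> ncol k = ncol k' \<Longrightarrow> k = k'"
  using L_props unfolding ncol_def nonpiv_def NP_def[symmetric] by (metis nth_eq_iff_index_eq)
lemma cover: "i < m \<Longrightarrow> (\<exists>j<r. i = piv j) \<or> (\<exists>k<m-r. i = ncol k)"
proof -
  assume i: "i < m"
  show ?thesis
  proof (cases "i \<in> NP")
    case True
    then obtain k where "k < m - r" "sorted_list_of_set NP ! k = i"
      using L_props by (metis in_set_conv_nth)
    then show ?thesis unfolding ncol_def nonpiv_def NP_def[symmetric] by auto
  next
    case False then show ?thesis using i by (auto simp: NP_def)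
  qed
qed

abbreviation "Pm \<equiv> Pmat m r M piv"

definition Qm :: "nat \<Rightarrow> nat \<Rightarrow> bit" where
  "Qm t i = (if t < m \<and> i < m then (if t < r then (if i = piv t then 1 else 0)
      else (if i = ncol (t-r) then 1 else 0) + (\<Sum>l<r. M (ncol (t-r)) l * (if i = piv l then 1 else 0))) else 0)"

lemma Pm_lt_r: "i < m \<Longrightarrow> j < r \<Longrightarrow> Pm i j = M i j" using r_le by (simp add: Pmat_def)
lemma Pm_ge_r: "i < m \<Longrightarrow> k < m - r \<Longrightarrow> Pm i (r+k) = (if i = ncol k then 1 else 0)"
  by (auto simp: Pmat_def ncol_def)

lemma Pvec: "i < m \<Longrightarrow> mvec m m Pm c i = (\<Sum>j<r. M i j * c j) + (\<Sum>k<m-r. (if i = ncol k then 1 else 0) * c (r+k))"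
  by (simp add: mvec_def sum_split_r[OF r_le] Pm_lt_r Pm_ge_r)

lemma sum_delta_piv: "j0 < r \<Longrightarrow> (\<Sum>j<r. M (piv j0) j * c j) = c j0"
proof -
  assume j0: "j0 < r"
  have "(\<Sum>j<r. M (piv j0) j * c j) = (\<Sum>j<r. if j0 = j then c j else 0)"
    using j0 by (intro sum.cong) (auto simp: M_piv)
  then show ?thesis using j0 by simp
qed

lemma Pvec_piv: "j0 < r \<Longrightarrow> mvec m m Pm c (piv j0) = c j0"
proof -
  assume j0: "j0 < r"
  have "(\<Sum>k<m-r. (if piv j0 = ncol k then 1 else 0) * c (r+k)) = 0"
    using ncol_notpiv j0 by (intro sum.neutral ballI) (metis lessThan_iff mult_zero_left)
  then show ?thesis using j0 piv_lt by (simp add: Pvec sum_delta_piv)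
qed

lemma Pvec_ncol: "k0 < m - r \<Longrightarrow> mvec m m Pm c (ncol k0) = (\<Sum>j<r. M (ncol k0) j * c j) + c (r+k0)"
proof -
  assume k0: "k0 < m - r"
  have "(\<Sum>k<m-r. (if ncol k0 = ncol k then 1 else 0) * c (r+k)) = (\<Sum>k<m-r. if k0 = k then c (r+k) else 0)"
    using ncol_inj k0 by (intro sum.cong) auto
  then show ?thesis using k0 ncol_lt by (simp add: Pvec)
qed

lemma Qvec_lt_r: "t < r \<Longrightarrow> mvec m m Qm a t = a (piv t)"
proof -
  assume t: "t < r"
  have "(\<Sum>i<m. Qm t i * a i) = (\<Sum>i<m. if piv t = i then a i else 0)"
    using t r_le by (intro sum.cong) (auto simp: Qm_def)
  then show ?thesis using t r_le piv_lt by (simp add: mvec_def)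
qed

lemma Qvec_ge_r: "k < m - r \<Longrightarrow> mvec m m Qm a (r+k) = a (ncol k) + (\<Sum>l<r. M (ncol k) l * a (piv l))"
proof -
  assume k: "k < m - r"
  have e: "Qm (r+k) i * a i = (if ncol k = i then a i else 0) + (\<Sum>l<r. if piv l = i then M (ncol k) l * a (piv l) else 0)"
    if i: "i < m" for i
  proof -
    have "Qm (r+k) i = (if i = ncol k then 1 else 0) + (\<Sum>l<r. M (ncol k) l * (if i = piv l then 1 else 0))"
      using i k by (auto simp: Qm_def)
    then show ?thesis by (auto simp: distrib_right sum_distrib_right intro!: sum.cong)
  qed
  have "(\<Sum>i<m. Qm (r+k) i * a i) = (\<Sum>i<m. (if ncol k = i then a i else 0) + (\<Sum>l<r. if piv l = i then M (ncol k) l * a (piv l) else 0))"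
    using e by (intro sum.cong) auto
  also have "\<dots> = a (ncol k) + (\<Sum>i<m. \<Sum>l<r. if piv l = i then M (ncol k) l * a (piv l) else 0)"
    using k ncol_lt by (simp add: sum.distrib)
  also have "(\<Sum>i<m. \<Sum>l<r. if piv l = i then M (ncol k) l * a (piv l) else 0)
     = (\<Sum>l<r. \<Sum>i<m. if piv l = i then M (ncol k) l * a (piv l) else 0)" by (rule sum.swap)
  also have "\<dots> = (\<Sum>l<r. M (ncol k) l * a (piv l))"
    using piv_lt by simp
  finally show ?thesis using k by (auto simp: mvec_def)
qed

end

lemma bit_cancel: "(x::bit) + (y + x) = y" by (cases x; cases y) simp_all
lemma bit_cancel2: "((x::bit) + y) + x = y" by (cases x; cases y) simp_all

context bsetup begin

lemma PQ_vec: "a \<in> vecs m \<Longrightarrow> mvec m m Pm (mvec m m Qm a) = a"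
proof (rule ext)
  fix i assume a: "a \<in> vecs m"
  show "mvec m m Pm (mvec m m Qm a) i = a i"
  proof (cases "i < m")
    case False then show ?thesis using a by (simp add: mvec_def vecs_def)
  next
    case True
    then consider (p) j where "j < r" "i = piv j" | (n) k where "k < m - r" "i = ncol k"
      using cover by blast
    then show ?thesis
    proof cases
      case p then show ?thesis by (simp add: Pvec_piv Qvec_lt_r)
    next
      case n
      have "(\<Sum>j<r. M (ncol k) j * mvec m m Qm a j) = (\<Sum>j<r. M (ncol k) j * a (piv j))"
        by (intro sum.cong) (simp_all add: Qvec_lt_r)
      then show ?thesis using n by (simp add: Pvec_ncol Qvec_ge_r bit_cancel)
    qed
  qed
qed

lemma QP_vec: "c \<in> vecs m \<Longrightarrow> mvec m m Qm (mvec m m Pm c) = c"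
proof (rule ext)
  fix t assume c: "c \<in> vecs m"
  show "mvec m m Qm (mvec m m Pm c) t = c t"
  proof (cases "t < m")
    case False then show ?thesis using c by (simp add: mvec_def vecs_def)
  next
    case True
    show ?thesis
    proof (cases "t < r")
      case True then show ?thesis by (simp add: Pvec_piv Qvec_lt_r)
    next
      case False
      define k where "k = t - r"
      have k: "k < m - r" "t = r + k" using False \<open>t < m\<close> by (auto simp: k_def)
      have "(\<Sum>l<r. M (ncol k) l * mvec m m Pm c (piv l)) = (\<Sum>l<r. M (ncol k) l * c l)"
        by (intro sum.cong) (simp_all add: Pvec_piv)
      then show ?thesis using k by (simp add: Pvec_ncol Qvec_ge_r bit_cancel2)
    qed
  qed
qed

lemma Pm_mat: "is_mat m m Pm" by (simp add: is_mat_def Pmat_def)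
lemma Qm_mat: "is_mat m m Qm" by (simp add: is_mat_def Qm_def)

lemma PQ: "mmul m m m Pm Qm = idm m"
proof (rule mat_eq[of m m])
  show "is_mat m m (mmul m m m Pm Qm)" "is_mat m m (idm m)" by (simp_all add: is_mat_mmul is_mat_idm)
  fix j assume "j < m"
  then show "mvec m m (mmul m m m Pm Qm) (ev j) = mvec m m (idm m) (ev j)"
    by (simp add: mvec_mmul[symmetric] PQ_vec ev_in mvec_idm)
qed

lemma QP: "mmul m m m Qm Pm = idm m"
proof (rule mat_eq[of m m])
  show "is_mat m m (mmul m m m Qm Pm)" "is_mat m m (idm m)" by (simp_all add: is_mat_mmul is_mat_idm)
  fix j assume "j < m"
  then show "mvec m m (mmul m m m Qm Pm) (ev j) = mvec m m (idm m) (ev j)"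
    by (simp add: mvec_mmul[symmetric] QP_vec ev_in mvec_idm)
qed

lemma minv_Q: "minv m Pm = Qm" by (rule minv_eq[OF Qm_mat PQ QP])

lemma PTQT_vec: "d \<in> vecs m \<Longrightarrow> mvec m m (mtrans Pm) (mvec m m (mtrans Qm) d) = d"
proof -
  have "mmul m m m (mtrans Pm) (mtrans Qm) = idm m"
    using QP by (metis mtrans_mmul mtrans_idm)
  then show "d \<in> vecs m \<Longrightarrow> ?thesis" by (simp add: inv_vec)
qed

lemma QTPT_vec: "d \<in> vecs m \<Longrightarrow> mvec m m (mtrans Qm) (mvec m m (mtrans Pm) d) = d"
proof -
  have "mmul m m m (mtrans Qm) (mtrans Pm) = idm m"
    using PQ by (metis mtrans_mmul mtrans_idm)
  then show "d \<in> vecs m \<Longrightarrow> ?thesis" by (simp add: inv_vec)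
qed

abbreviation "Ht \<equiv> Htil m r M piv"
abbreviation "II \<equiv> IImat m r piv"

lemma Htil_eq: "Ht = (\<lambda>i j. if i < m \<and> j < m - r then Qm (r+j) i else 0)"
  unfolding Htil_def minv_Q mtrans_def by simp

lemma QT_decomp: "mvec m m (mtrans Qm) d = vadd (mvec m r II (\<lambda>j. if j < r then d j else 0))
      (mvec m (m-r) Ht (\<lambda>k. if k < m - r then d (r+k) else 0))"
proof (rule ext)
  fix i show "mvec m m (mtrans Qm) d i = vadd (mvec m r II (\<lambda>j. if j < r then d j else 0))
      (mvec m (m-r) Ht (\<lambda>k. if k < m - r then d (r+k) else 0)) i"
  proof (cases "i < m")
    case False then show ?thesis by (simp add: mvec_def vadd_def)
  next
    case True
    have 1: "(\<Sum>t<r. Qm t i * d t) = (\<Sum>j<r. II i j * (if j < r then d j else 0))"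
      using True r_le by (intro sum.cong) (auto simp: Qm_def IImat_def)
    have 2: "(\<Sum>k<m-r. Qm (r+k) i * d (r+k)) = (\<Sum>k<m-r. Ht i k * (if k < m - r then d (r+k) else 0))"
      using True by (intro sum.cong) (auto simp: Htil_eq)
    show ?thesis using True 1 2 by (simp add: mvec_def vadd_def mtrans_def sum_split_r[OF r_le])
  qed
qed

lemma PT_r: "j < r \<Longrightarrow> mvec m m (mtrans Pm) y j = mvec r m (mtrans M) y j"
  using r_le by (auto simp: mvec_def mtrans_def Pm_lt_r intro!: sum.cong)

lemma vadd_comm: "vadd u v = vadd v u" by (simp add: vadd_def add.commute)

lemma KL:
  assumes y: "y \<in> vecs m" and d: "d \<in> vecs r"
  shows "mvec r m (mtrans M) y = d \<longleftrightarrow> (\<exists>v\<in>vecs (m-r). y = vadd (mvec m (m-r) Ht v) (mvec m r II d))"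
proof
  assume h: "mvec r m (mtrans M) y = d"
  define e where "e = mvec m m (mtrans Pm) y"
  have "(\<lambda>j. if j < r then e j else 0) = d"
  proof
    fix j show "(if j < r then e j else 0) = d j"
      using d h by (auto simp: e_def PT_r vecs_def)
  qed
  moreover have "(\<lambda>k. if k < m - r then e (r+k) else 0) \<in> vecs (m-r)" by (simp add: vecs_def)
  moreover have "y = mvec m m (mtrans Qm) e" using QTPT_vec[OF y] by (simp add: e_def)
  ultimately show "\<exists>v\<in>vecs (m-r). y = vadd (mvec m (m-r) Ht v) (mvec m r II d)"
    by (metis QT_decomp vadd_comm)
next
  assume "\<exists>v\<in>vecs (m-r). y = vadd (mvec m (m-r) Ht v) (mvec m r II d)"
  then obtain v where v: "v \<in> vecs (m-r)" and yv: "y = vadd (mvec m (m-r) Ht v) (mvec m r II d)" by blast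
  define e where "e = (\<lambda>j. if j < r then d j else if j < m then v (j - r) else 0)"
  have ein: "e \<in> vecs m" using r_le by (simp add: e_def vecs_def)
  have 1: "(\<lambda>j. if j < r then e j else 0) = d" using d by (auto simp: e_def vecs_def)
  have 2: "(\<lambda>k. if k < m - r then e (r+k) else 0) = v" using v by (auto simp: e_def vecs_def)
  have "y = mvec m m (mtrans Qm) e" using yv by (simp add: QT_decomp 1 2 vadd_comm)
  then have PTy: "mvec m m (mtrans Pm) y = e" using PTQT_vec[OF ein] by simp
  show "mvec r m (mtrans M) y = d"
  proof
    fix j show "mvec r m (mtrans M) y j = d j"
    proof (cases "j < r")
      case True then show ?thesis using PTy PT_r[OF True, of y] by (simp add: e_def)
    next
      case False then show ?thesis using d by (simp add: mvec_def vecs_def)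
    qed
  qed
qed

end

lemma pauli1_eq: "pauli1 a b s t = (if s = t + a then sb (b * t) else 0)"
  by (cases a; cases b; cases s; cases t)
     (simp_all add: pauli1_def mult2_def sigx_def sigz_def id2_def sb_def)

definition sgn :: "nat \<Rightarrow> (nat \<Rightarrow> bit) \<Rightarrow> (nat \<Rightarrow> bit) \<Rightarrow> complex" where
  "sgn m y v = (\<Prod>i<m. sb (y i * v i))"

lemma Dmat_eq:
  assumes "u \<in> vecs m" "x \<in> vecs m" "v \<in> vecs m"
  shows "Dmat m x y u v = (if v = vadd u x then sgn m y v else 0)"
proof (cases "v = vadd u x")
  case True
  have "u i = v i + x i" for i using True by (simp add: vadd_def add.assoc)
  then show ?thesis using True by (simp add: Dmat_def pauli1_eq sgn_def)
next
  case False
  then obtain i where i: "v i \<noteq> u i + x i" by (auto simp: vadd_def)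
  have "i < m"
  proof (rule ccontr)
    assume "\<not> i < m" then show False using assms i by (simp add: vecs_def)
  qed
  moreover have "u i \<noteq> v i + x i" using i
    by (cases "u i"; cases "v i"; cases "x i") simp_all
  ultimately have "pauli1 (x i) (y i) (u i) (v i) = 0" by (simp add: pauli1_eq)
  then have "Dmat m x y u v = 0" unfolding Dmat_def using \<open>i < m\<close>
    by (intro prod_zero) auto
  then show ?thesis using False by simp
qed

lemma qform_expand:
  assumes x: "x \<in> vecs m" and y: "y \<in> vecs m"
  shows "qform m w (Emat m x y) = \<i> ^ (\<Sum>i<m. lift (x i) * lift (y i)) *
     (\<Sum>u\<in>vecs m. cnj (w u) * (sgn m y (vadd u x) * w (vadd u x)))"
proof -
  have "(\<Sum>v\<in>vecs m. Emat m x y u v * w v) = \<i> ^ (\<Sum>i<m. lift (x i) * lift (y i)) * (sgn m y (vadd u x) * w (vadd u x))"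
    if u: "u \<in> vecs m" for u
  proof -
    have "(\<Sum>v\<in>vecs m. Emat m x y u v * w v) = (\<Sum>v\<in>vecs m. if v = vadd u x then
            \<i> ^ (\<Sum>i<m. lift (x i) * lift (y i)) * (sgn m y v * w v) else 0)"
      using u x by (intro sum.cong) (auto simp: Emat_def Dmat_eq)
    also have "\<dots> = \<i> ^ (\<Sum>i<m. lift (x i) * lift (y i)) * (sgn m y (vadd u x) * w (vadd u x))"
      using vadd_in[OF u x] by (simp add: vecs_finite)
    finally show ?thesis .
  qed
  then show ?thesis unfolding qform_def
    by (simp add: sum_distrib_left mult.left_commute cong: sum.cong)
qed

lemma sgn_vadd: "sgn m y (vadd u v) = sgn m y u * sgn m y v"
  by (simp add: sgn_def vadd_def distrib_left sb_add prod.distrib)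

lemma sgn_ne0: "sgn m y v \<noteq> 0" by (simp add: sgn_def)

lemma sgn_mvec: "sgn m y (mvec m m A c) = (\<Prod>j<m. sb (c j * mvec m m (mtrans A) y j))"
proof -
  have "(\<Sum>i<m. y i * mvec m m A c i) = (\<Sum>i<m. \<Sum>j<m. y i * A i j * c j)"
    by (intro sum.cong) (auto simp: mvec_def sum_distrib_left mult.assoc)
  also have "\<dots> = (\<Sum>j<m. \<Sum>i<m. y i * A i j * c j)" by (rule sum.swap)
  also have "\<dots> = (\<Sum>j<m. c j * mvec m m (mtrans A) y j)"
    by (intro sum.cong) (auto simp: mvec_def sum_distrib_left mtrans_def mult.commute mult.left_commute)
  finally have "(\<Sum>i<m. y i * mvec m m A c i) = (\<Sum>j<m. c j * mvec m m (mtrans A) y j)" .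
  then have "sb (\<Sum>i<m. y i * mvec m m A c i) = sb (\<Sum>j<m. c j * mvec m m (mtrans A) y j)" by simp
  then show ?thesis by (simp add: sgn_def sb_sum)
qed

definition Qf :: "nat \<Rightarrow> (nat \<Rightarrow> nat \<Rightarrow> bit) \<Rightarrow> (nat \<Rightarrow> bit) \<Rightarrow> nat" where
  "Qf r S c = (\<Sum>j<r. \<Sum>k<r. lift (c j) * lift (S j k) * lift (c k))"

lemma quad_nat:
  assumes sym: "\<forall>j<r. \<forall>k<r. S j k = S k j"
  shows "Qf r S (vadd c x) + 4 * (\<Sum>j<r. \<Sum>k<r. lift (S j k) * lift (c j) * lift (x j) * (lift (c k) + lift (x k)))
       = Qf r S c + Qf r S x + 2 * (\<Sum>j<r. \<Sum>k<r. lift (c j) * lift (S j k) * lift (x k))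
         + 4 * (\<Sum>j<r. \<Sum>k<r. lift (S j k) * lift (c j) * lift (x j) * lift (c k) * lift (x k))"
proof -
  let ?a = "\<lambda>j. int (lift (c j))" and ?e = "\<lambda>j. int (lift (x j))" and ?s = "\<lambda>j k. int (lift (S j k))"
  have B: "(\<Sum>j<r. \<Sum>k<r. lift (x j) * lift (S j k) * lift (c k)) = (\<Sum>j<r. \<Sum>k<r. lift (c j) * lift (S j k) * lift (x k))"
  proof -
    have "(\<Sum>j<r. \<Sum>k<r. lift (x j) * lift (S j k) * lift (c k)) = (\<Sum>k<r. \<Sum>j<r. lift (x j) * lift (S j k) * lift (c k))"
      by (rule sum.swap)
    also have "\<dots> = (\<Sum>k<r. \<Sum>j<r. lift (c k) * lift (S k j) * lift (x j))"
      using sym by (intro sum.cong) (auto simp: mult.commute mult.left_commute)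
    finally show ?thesis .
  qed
  have T: "(\<Sum>j<r. \<Sum>k<r. lift (S j k) * lift (c k) * lift (x k) * (lift (c j) + lift (x j)))
      = (\<Sum>j<r. \<Sum>k<r. lift (S j k) * lift (c j) * lift (x j) * (lift (c k) + lift (x k)))"
  proof -
    have "(\<Sum>j<r. \<Sum>k<r. lift (S j k) * lift (c k) * lift (x k) * (lift (c j) + lift (x j)))
        = (\<Sum>k<r. \<Sum>j<r. lift (S j k) * lift (c k) * lift (x k) * (lift (c j) + lift (x j)))"
      by (rule sum.swap)
    also have "\<dots> = (\<Sum>k<r. \<Sum>j<r. lift (S k j) * lift (c k) * lift (x k) * (lift (c j) + lift (x j)))"
      using sym by (intro sum.cong) auto
    finally show ?thesis .
  qed
  have pt: "int (lift (vadd c x j) * lift (S j k) * lift (vadd c x k))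
     = int (lift (c j) * lift (S j k) * lift (c k)) + int (lift (x j) * lift (S j k) * lift (x k))
       + int (lift (c j) * lift (S j k) * lift (x k)) + int (lift (x j) * lift (S j k) * lift (c k))
       - 2 * int (lift (S j k) * lift (c j) * lift (x j) * (lift (c k) + lift (x k)))
       - 2 * int (lift (S j k) * lift (c k) * lift (x k) * (lift (c j) + lift (x j)))
       + 4 * int (lift (S j k) * lift (c j) * lift (x j) * lift (c k) * lift (x k))" for j k
    by (simp add: vadd_def lift_add algebra_simps)
  have "int (Qf r S (vadd c x)) = int (Qf r S c) + int (Qf r S x)
     + int (\<Sum>j<r. \<Sum>k<r. lift (c j) * lift (S j k) * lift (x k))
     + int (\<Sum>j<r. \<Sum>k<r. lift (x j) * lift (S j k) * lift (c k))
     - 2 * int (\<Sum>j<r. \<Sum>k<r. lift (S j k) * lift (c j) * lift (x j) * (lift (c k) + lift (x k)))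
     - 2 * int (\<Sum>j<r. \<Sum>k<r. lift (S j k) * lift (c k) * lift (x k) * (lift (c j) + lift (x j)))
     + 4 * int (\<Sum>j<r. \<Sum>k<r. lift (S j k) * lift (c j) * lift (x j) * lift (c k) * lift (x k))"
    unfolding Qf_def of_nat_sum pt
    by (simp only: sum.distrib sum_subtractf sum_distrib_left)
  then show ?thesis unfolding B T by linarith
qed

lemma neg1_B: "(-1::complex) ^ (\<Sum>j<(r::nat). \<Sum>k<r. lift (c j) * lift (S j k) * lift (x k))
   = (\<Prod>j<r. sb (c j * (\<Sum>k<r. S j k * x k)))"
proof -
  have "(-1::complex) ^ (\<Sum>j<r. \<Sum>k<r. lift (c j) * lift (S j k) * lift (x k))
     = (-1::complex) ^ (\<Sum>j<r. \<Sum>k<r. lift (c j * S j k * x k))" by (simp add: lift_mult)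
  also have "\<dots> = (\<Prod>j<r. \<Prod>k<r. sb (c j * S j k * x k))" by (simp add: power_sum neg1_lift)
  also have "\<dots> = (\<Prod>j<r. sb (\<Sum>k<r. c j * S j k * x k))"
  proof (rule prod.cong[OF refl])
    fix j show "(\<Prod>k<r. sb (c j * S j k * x k)) = sb (\<Sum>k<r. c j * S j k * x k)"
      by (rule sb_sum[OF finite_lessThan, symmetric])
  qed
  also have "\<dots> = (\<Prod>j<r. sb (c j * (\<Sum>k<r. S j k * x k)))" by (simp add: sum_distrib_left mult.assoc)
  finally show ?thesis .
qed

lemma quad:
  assumes sym: "\<forall>j<r. \<forall>k<r. S j k = S k j"
  shows "\<i> ^ Qf r S (vadd c x) = \<i> ^ Qf r S c * \<i> ^ Qf r S x * (\<Prod>j<r. sb (c j * (\<Sum>k<r. S j k * x k)))"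
proof -
  have "\<i> ^ (Qf r S (vadd c x) + 4 * (\<Sum>j<r. \<Sum>k<r. lift (S j k) * lift (c j) * lift (x j) * (lift (c k) + lift (x k))))
       = \<i> ^ (Qf r S c + Qf r S x + 2 * (\<Sum>j<r. \<Sum>k<r. lift (c j) * lift (S j k) * lift (x k))
         + 4 * (\<Sum>j<r. \<Sum>k<r. lift (S j k) * lift (c j) * lift (x j) * lift (c k) * lift (x k)))"
    using quad_nat[OF sym] by simp
  then have "\<i> ^ Qf r S (vadd c x) = \<i> ^ Qf r S c * \<i> ^ Qf r S x * (-1) ^ (\<Sum>j<r. \<Sum>k<r. lift (c j) * lift (S j k) * lift (x k))"
    by (simp add: power_add power_mult)
  then show ?thesis by (simp add: neg1_B)
qed

lemma cnj_i_pow: "cnj (\<i> ^ n) * \<i> ^ n = 1"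
proof -
  have "cnj (\<i> ^ n) * \<i> ^ n = (cnj \<i> * \<i>) ^ n" by (simp only: power_mult_distrib complex_cnj_power)
  then show ?thesis by simp
qed

definition fag :: "nat \<Rightarrow> nat \<Rightarrow> (nat \<Rightarrow> bit) \<Rightarrow> (nat \<Rightarrow> bit) \<Rightarrow> nat \<Rightarrow> bit \<Rightarrow> complex" where
  "fag m r b c j t = (if r \<le> j \<and> b j \<noteq> t then 0 else 1)"

lemma fagree_prod: "fagree m b c r = (\<Prod>j<m. if r \<le> j \<and> b j \<noteq> c j then 0 else 1)"
proof (cases "\<forall>i. r \<le> i \<and> i < m \<longrightarrow> b i = c i")
  case True then show ?thesis by (auto simp: fagree_def intro!: prod.neutral[symmetric] prod.neutral)
next
  case False
  then obtain i where "r \<le> i" "i < m" "b i \<noteq> c i" by auto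
  then show ?thesis by (auto simp: fagree_def intro!: prod_zero[symmetric] bexI[of _ i])
qed

lemma fagree_01: "fagree m b c r = 0 \<or> fagree m b c r = 1" by (simp add: fagree_def)

context bsetup begin

definition Wc :: "(nat \<Rightarrow> nat \<Rightarrow> bit) \<Rightarrow> (nat \<Rightarrow> bit) \<Rightarrow> (nat \<Rightarrow> bit) \<Rightarrow> complex" where
  "Wc S b c = complex_of_real (2 powr (- real r / 2)) *
     \<i> ^ (Qf r S c + 2 * (\<Sum>j<m. lift (b j) * lift (c j))) * fagree m b c r"

lemma bssc_P: "c \<in> vecs m \<Longrightarrow> bssc m r M piv S b (mvec m m Pm c) = Wc S b c"
  unfolding bssc_def Wc_def Let_def minv_Q Qf_def by (simp add: QP_vec)

lemma P_bij: "bij_betw (mvec m m Pm) (vecs m) (vecs m)"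
proof (rule bij_betw_byWitness[where f'="mvec m m Qm"])
  show "\<forall>a\<in>vecs m. mvec m m Qm (mvec m m Pm a) = a" using QP_vec by blast
  show "\<forall>a\<in>vecs m. mvec m m Pm (mvec m m Qm a) = a" using PQ_vec by blast
  show "mvec m m Pm ` vecs m \<subseteq> vecs m" "mvec m m Qm ` vecs m \<subseteq> vecs m" by auto
qed

lemma qform_c:
  assumes x: "x \<in> vecs m" and y: "y \<in> vecs m"
  shows "qform m (bssc m r M piv S b) (Emat m x y) = \<i> ^ (\<Sum>i<m. lift (x i) * lift (y i)) *
     (\<Sum>c\<in>vecs m. cnj (Wc S b c) * (sgn m y (mvec m m Pm (vadd c (mvec m m Qm x))) * Wc S b (vadd c (mvec m m Qm x))))"
proof -
  let ?w = "bssc m r M piv S b"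
  let ?g = "\<lambda>u. cnj (?w u) * (sgn m y (vadd u x) * ?w (vadd u x))"
  have "(\<Sum>u\<in>vecs m. ?g u) = (\<Sum>c\<in>vecs m. ?g (mvec m m Pm c))"
    by (rule sum.reindex_bij_betw[OF P_bij, symmetric])
  also have "\<dots> = (\<Sum>c\<in>vecs m. cnj (Wc S b c) * (sgn m y (mvec m m Pm (vadd c (mvec m m Qm x))) * Wc S b (vadd c (mvec m m Qm x))))"
  proof (rule sum.cong[OF refl])
    fix c assume c: "c \<in> vecs m"
    have e: "vadd (mvec m m Pm c) x = mvec m m Pm (vadd c (mvec m m Qm x))"
      by (simp add: mvec_vadd PQ_vec[OF x])
    show "?g (mvec m m Pm c) = cnj (Wc S b c) * (sgn m y (mvec m m Pm (vadd c (mvec m m Qm x))) * Wc S b (vadd c (mvec m m Qm x)))"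
      unfolding e using c by (simp add: bssc_P vadd_in)
  qed
  finally show ?thesis using qform_expand[OF x y] by simp
qed

lemma zero_case:
  assumes xi: "xi \<in> vecs m" "xi \<notin> vecs r" and c: "c \<in> vecs m"
  shows "cnj (Wc S b c) * (s * Wc S b (vadd c xi)) = 0"
proof -
  obtain j where j: "r \<le> j" "xi j \<noteq> 0" using xi(2) by (auto simp: vecs_def)
  have jm: "j < m"
  proof (rule ccontr)
    assume "\<not> j < m" then show False using xi(1) j by (simp add: vecs_def)
  qed
  have "fagree m b c r = 0 \<or> fagree m b (vadd c xi) r = 0"
  proof (cases "b j = c j")
    case True
    then have "b j \<noteq> vadd c xi j" using j by (simp add: vadd_def)
    then show ?thesis using j jm by (auto simp: fagree_def)
  next
    case False then show ?thesis using j jm by (auto simp: fagree_def)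
  qed
  then show ?thesis by (auto simp: Wc_def)
qed

lemma cnj_sb[simp]: "cnj (sb t) = sb t" by (simp add: sb_def)

definition Fc :: "(nat \<Rightarrow> bit) \<Rightarrow> (nat \<Rightarrow> bit) \<Rightarrow> complex" where
  "Fc b c = (\<Prod>j<m. if r \<le> j \<and> b j \<noteq> c j then 0 else 1)"
definition SBc :: "(nat \<Rightarrow> bit) \<Rightarrow> (nat \<Rightarrow> bit) \<Rightarrow> complex" where
  "SBc b c = (\<Prod>j<m. sb (b j * c j))"
definition alpha :: complex where "alpha = complex_of_real (2 powr (- real r / 2))"

lemma Wc_eq: "Wc S b c = alpha * \<i> ^ (Qf r S c) * SBc b c * Fc b c"
proof -
  have "\<i> ^ (Qf r S c + 2 * (\<Sum>j<m. lift (b j) * lift (c j))) = \<i> ^ (Qf r S c) * (-1) ^ (\<Sum>j<m. lift (b j * c j))"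
    by (simp add: power_add power_mult lift_mult)
  then show ?thesis unfolding Wc_def alpha_def SBc_def Fc_def fagree_prod
    by (simp add: neg1_sum_lift)
qed

lemma cnj_Fc: "cnj (Fc b c) = Fc b c" by (simp add: Fc_def if_distrib cong: if_cong)
lemma cnj_SBc: "cnj (SBc b c) = SBc b c" by (simp add: SBc_def)
lemma cnj_alpha: "cnj alpha = alpha" by (simp add: alpha_def)
lemma Fc_sq: "Fc b c * Fc b c = Fc b c"
  by (simp add: Fc_def prod.distrib[symmetric] if_distrib cong: if_cong)
lemma SBc_sq: "SBc b c * SBc b c = 1"
  by (simp add: SBc_def prod.distrib[symmetric])
lemma SBc_add: "SBc b (vadd c x) = SBc b c * SBc b x"
  by (simp add: SBc_def vadd_def distrib_left sb_add prod.distrib)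
lemma Fc_add: "x \<in> vecs r \<Longrightarrow> Fc b (vadd c x) = Fc b c"
  unfolding Fc_def by (intro prod.cong) (auto simp: vadd_def vecs_def)
lemma cnj_i_pow': "(- \<i>) ^ n * \<i> ^ n = 1"
proof -
  have "(- \<i>) ^ n * \<i> ^ n = (- \<i> * \<i>) ^ n" by (simp only: power_mult_distrib)
  then show ?thesis by simp
qed

lemma QS_ext: "(\<Prod>j<r. sb (c j * (\<Sum>k<r. S j k * x k))) = (\<Prod>j<m. sb (c j * mvec r r S x j))"
proof -
  have "(\<Prod>j<m. sb (c j * mvec r r S x j)) = (\<Prod>j<r. sb (c j * mvec r r S x j))"
    by (rule prod.mono_neutral_right) (auto simp: mvec_def r_le)
  also have "\<dots> = (\<Prod>j<r. sb (c j * (\<Sum>k<r. S j k * x k)))"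
    by (intro prod.cong) (auto simp: mvec_def)
  finally show ?thesis by simp
qed

definition hh :: "(nat \<Rightarrow> nat \<Rightarrow> bit) \<Rightarrow> (nat \<Rightarrow> bit) \<Rightarrow> (nat \<Rightarrow> bit) \<Rightarrow> (nat \<Rightarrow> bit) \<Rightarrow> nat \<Rightarrow> bit \<Rightarrow> complex" where
  "hh S b y x j t = sb (t * mvec r r S x j) * sb (t * mvec m m (mtrans Pm) y j) * (if r \<le> j \<and> b j \<noteq> t then 0 else 1)"
definition Kc :: "(nat \<Rightarrow> nat \<Rightarrow> bit) \<Rightarrow> (nat \<Rightarrow> bit) \<Rightarrow> (nat \<Rightarrow> bit) \<Rightarrow> (nat \<Rightarrow> bit) \<Rightarrow> complex" where
  "Kc S b y x = alpha * alpha * \<i> ^ (Qf r S x) * sgn m y (mvec m m Pm x) * SBc b x"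

lemma alg:
  fixes a cI iQ sB F sP sX iX qS sBx :: complex
  assumes "cI * iQ = 1" "sB * sB = 1" "F * F = F"
  shows "(a * cI * sB * F) * ((sP * sX) * (a * (iQ * iX * qS) * (sB * sBx) * F))
       = (a * a * iX * sX * sBx) * (qS * sP * F)"
proof -
  have "(a * cI * sB * F) * ((sP * sX) * (a * (iQ * iX * qS) * (sB * sBx) * F))
      = (cI * iQ) * (sB * sB) * (F * F) * (a * a * iX * sX * sBx * qS * sP)"
    by (simp only: ac_simps)
  also have "\<dots> = (a * a * iX * sX * sBx) * (qS * sP * F)" using assms by (simp only: ac_simps mult_1_left)
  finally show ?thesis .
qed

lemma term_eq:
  assumes sym: "\<forall>j<r. \<forall>k<r. S j k = S k j" and x: "x \<in> vecs r" and c: "c \<in> vecs m"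
  shows "cnj (Wc S b c) * (sgn m y (mvec m m Pm (vadd c x)) * Wc S b (vadd c x))
      = Kc S b y x * (\<Prod>j<m. hh S b y x j (c j))"
proof -
  let ?QS = "\<Prod>j<m. sb (c j * mvec r r S x j)"
  let ?SP = "\<Prod>j<m. sb (c j * mvec m m (mtrans Pm) y j)"
  have W2: "Wc S b (vadd c x) = alpha * (\<i> ^ Qf r S c * \<i> ^ Qf r S x * ?QS) * (SBc b c * SBc b x) * Fc b c"
    using Wc_eq[of S b "vadd c x"] quad[OF sym, of c x] QS_ext[of c S x] by (simp add: SBc_add Fc_add[OF x])
  have W1: "cnj (Wc S b c) = alpha * cnj (\<i> ^ Qf r S c) * SBc b c * Fc b c"
    using Wc_eq[of S b c] by (simp only: complex_cnj_mult cnj_Fc cnj_SBc cnj_alpha)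
  have sg: "sgn m y (mvec m m Pm (vadd c x)) = ?SP * sgn m y (mvec m m Pm x)"
    by (simp add: mvec_vadd sgn_vadd sgn_mvec)
  have hp: "(\<Prod>j<m. hh S b y x j (c j)) = ?QS * ?SP * Fc b c"
    by (simp add: hh_def Fc_def prod.distrib)
  have 1: "cnj (\<i> ^ Qf r S c) * \<i> ^ Qf r S c = 1" by (rule cnj_i_pow)
  show ?thesis unfolding W1 W2 sg hp Kc_def
    by (rule alg[OF 1 SBc_sq Fc_sq])
qed

lemma alpha_ne0: "alpha \<noteq> 0" by (simp add: alpha_def)
lemma SBc_ne0: "SBc b c \<noteq> 0" by (simp add: SBc_def)
lemma Kc_ne0: "Kc S b y x \<noteq> 0" by (simp add: Kc_def alpha_ne0 SBc_ne0 sgn_ne0)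

lemma hh_sum: "j < m \<Longrightarrow> (hh S b y x j 0 + hh S b y x j 1 \<noteq> 0) \<longleftrightarrow>
    (j < r \<longrightarrow> mvec r r S x j = mvec m m (mtrans Pm) y j)"
proof -
  assume j: "j < m"
  show ?thesis
  proof (cases "j < r")
    case True
    then show ?thesis unfolding hh_def
      by (cases "mvec r r S x j"; cases "mvec m m (mtrans Pm) y j") simp_all
  next
    case False
    then have "mvec r r S x j = 0" by (simp add: mvec_def)
    then show ?thesis using False unfolding hh_def
      by (cases "b j"; cases "mvec m m (mtrans Pm) y j") simp_all
  qed
qed

lemma NZ:
  assumes sym: "\<forall>j<r. \<forall>k<r. S j k = S k j" and x: "x \<in> vecs m" and y: "y \<in> vecs m"
  shows "qform m (bssc m r M piv S b) (Emat m x y) \<noteq> 0 \<longleftrightarrow>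
     (mvec m m Qm x \<in> vecs r \<and> mvec r m (mtrans M) y = mvec r r S (mvec m m Qm x))"
proof (cases "mvec m m Qm x \<in> vecs r")
  case False
  have "(\<Sum>c\<in>vecs m. cnj (Wc S b c) * (sgn m y (mvec m m Pm (vadd c (mvec m m Qm x))) * Wc S b (vadd c (mvec m m Qm x)))) = 0"
    using zero_case[OF mvec_in False] by (intro sum.neutral) blast
  then show ?thesis using False by (simp add: qform_c[OF x y])
next
  case True
  let ?x = "mvec m m Qm x"
  have "(\<Sum>c\<in>vecs m. cnj (Wc S b c) * (sgn m y (mvec m m Pm (vadd c ?x)) * Wc S b (vadd c ?x)))
     = (\<Sum>c\<in>vecs m. Kc S b y ?x * (\<Prod>j<m. hh S b y ?x j (c j)))"
    using term_eq[OF sym True] by (intro sum.cong) auto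
  also have "\<dots> = Kc S b y ?x * (\<Prod>j<m. hh S b y ?x j 0 + hh S b y ?x j 1)"
    by (simp add: sum_distrib_left[symmetric] sum_prod_vecs)
  finally have q: "qform m (bssc m r M piv S b) (Emat m x y) = \<i> ^ (\<Sum>i<m. lift (x i) * lift (y i)) *
      (Kc S b y ?x * (\<Prod>j<m. hh S b y ?x j 0 + hh S b y ?x j 1))"
    by (simp add: qform_c[OF x y])
  have "(\<Prod>j<m. hh S b y ?x j 0 + hh S b y ?x j 1) \<noteq> 0 \<longleftrightarrow> (\<forall>j<m. j < r \<longrightarrow> mvec r r S ?x j = mvec m m (mtrans Pm) y j)"
    by (simp add: hh_sum lessThan_iff Ball_def)
  also have "\<dots> \<longleftrightarrow> mvec r m (mtrans M) y = mvec r r S ?x"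
  proof
    assume h: "\<forall>j<m. j < r \<longrightarrow> mvec r r S ?x j = mvec m m (mtrans Pm) y j"
    show "mvec r m (mtrans M) y = mvec r r S ?x"
    proof
      fix j show "mvec r m (mtrans M) y j = mvec r r S ?x j"
        using h r_le PT_r[of j y] by (cases "j < r") (auto simp: mvec_def)
    qed
  next
    assume "mvec r m (mtrans M) y = mvec r r S ?x"
    then show "\<forall>j<m. j < r \<longrightarrow> mvec r r S ?x j = mvec m m (mtrans Pm) y j"
      using PT_r by simp
  qed
  finally show ?thesis using True q by (simp add: Kc_ne0)
qed

end

lemma vadd_zero: "vadd u (\<lambda>_. 0) = u" by (simp add: vadd_def)
lemma mvec_zero: "mvec n k A (\<lambda>_. 0) = (\<lambda>_. 0)" by (rule ext) (simp add: mvec_def)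
lemma zero_vecs: "(\<lambda>_. 0) \<in> vecs n" by (simp add: vecs_def)

context bsetup begin

lemma Pz_eq: "z \<in> vecs r \<Longrightarrow> mvec m m Pm z = mvec m r M z"
proof (rule ext)
  fix i assume z: "z \<in> vecs r"
  show "mvec m m Pm z i = mvec m r M z i"
  proof (cases "i < m")
    case True
    have "(\<Sum>k<m-r. (if i = ncol k then 1 else 0) * z (r+k)) = 0"
      using z by (intro sum.neutral) (auto simp: vecs_def)
    then show ?thesis using True Pvec[OF True, of z] by (simp add: mvec_def)
  next
    case False then show ?thesis by (simp add: mvec_def)
  qed
qed

lemma RHS_iff:
  assumes x: "x \<in> vecs m"
  shows "(x \<in> colspace m r M \<and> (\<exists>z\<in>vecs r. x = mvec m r M z \<and> Q z)) \<longleftrightarrow>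
         (mvec m m Qm x \<in> vecs r \<and> Q (mvec m m Qm x))"
proof
  assume "x \<in> colspace m r M \<and> (\<exists>z\<in>vecs r. x = mvec m r M z \<and> Q z)"
  then obtain z where z: "z \<in> vecs r" "x = mvec m r M z" "Q z" by blast
  have "mvec m m Qm x = z" using z Pz_eq[OF z(1)] QP_vec[OF vecs_mono[OF z(1) r_le]] by simp
  then show "mvec m m Qm x \<in> vecs r \<and> Q (mvec m m Qm x)" using z by simp
next
  assume h: "mvec m m Qm x \<in> vecs r \<and> Q (mvec m m Qm x)"
  have "x = mvec m r M (mvec m m Qm x)" using PQ_vec[OF x] Pz_eq h by simp
  then show "x \<in> colspace m r M \<and> (\<exists>z\<in>vecs r. x = mvec m r M z \<and> Q z)"
    using h unfolding colspace_def by blast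
qed

lemma bdot_M: "bdot m y (mvec m r M z) = (\<Sum>j<r. mvec r m (mtrans M) y j * z j)"
proof -
  have "bdot m y (mvec m r M z) = (\<Sum>i<m. \<Sum>j<r. y i * M i j * z j)"
    unfolding bdot_def by (intro sum.cong) (auto simp: mvec_def sum_distrib_left mult.assoc)
  also have "\<dots> = (\<Sum>j<r. \<Sum>i<m. y i * M i j * z j)" by (rule sum.swap)
  also have "\<dots> = (\<Sum>j<r. mvec r m (mtrans M) y j * z j)"
    by (intro sum.cong) (auto simp: mvec_def sum_distrib_left sum_distrib_right mtrans_def mult_ac)
  finally show ?thesis .
qed

lemma perp_iff: "y \<in> perp m (colspace m r M) \<longleftrightarrow> y \<in> vecs m \<and> mvec r m (mtrans M) y = (\<lambda>_. 0)"
proof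
  assume y: "y \<in> perp m (colspace m r M)"
  then have yv: "y \<in> vecs m" by (simp add: perp_def)
  have "mvec r m (mtrans M) y j = 0" for j
  proof (cases "j < r")
    case True
    have "bdot m y (mvec m r M (ev j)) = 0" using y ev_in[OF True] by (auto simp: perp_def colspace_def)
    moreover have "(\<Sum>k<r. mvec r m (mtrans M) y k * ev j k) = mvec r m (mtrans M) y j"
      using True by (simp add: ev_def)
    ultimately show ?thesis by (simp add: bdot_M)
  next
    case False then show ?thesis by (simp add: mvec_def)
  qed
  then show "y \<in> vecs m \<and> mvec r m (mtrans M) y = (\<lambda>_. 0)" using yv by auto
next
  assume "y \<in> vecs m \<and> mvec r m (mtrans M) y = (\<lambda>_. 0)"
  then show "y \<in> perp m (colspace m r M)"
    by (auto simp: perp_def colspace_def bdot_M)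
qed

end

theorem mainTheorem6:
  fixes m r :: nat and M S :: "nat \<Rightarrow> nat \<Rightarrow> bit" and piv :: "nat \<Rightarrow> nat"
    and H :: "(nat \<Rightarrow> bit) set" and b :: "nat \<Rightarrow> bit"
  assumes "1 \<le> m"
    and "cref m r M piv"
    and "H = colspace m r M"
    and "\<forall>j<r. \<forall>k<r. S j k = S k j"
    and "b \<in> vecs m"
  shows
    "(\<forall>x\<in>vecs m. \<forall>y\<in>vecs m.
        (qform m (bssc m r M piv S b) (Emat m x y) \<noteq> 0) \<longleftrightarrow>
          (x \<in> H \<and> (\<exists>z\<in>vecs r. x = mvec m r M z \<and>
                mvec r m (mtrans M) y = mvec r r S z)))
   \<and> (\<forall>x\<in>vecs m. \<forall>y\<in>vecs m.
        (qform m (bssc m r M piv S b) (Emat m x y) \<noteq> 0) \<longleftrightarrow>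
          (x \<in> H \<and> (\<exists>z\<in>vecs r. x = mvec m r M z \<and>
                y \<in> {vadd (mvec m (m - r) (Htil m r M piv) v) (mvec m r (IImat m r piv) (mvec r r S z))
                      | v. v \<in> vecs (m - r)})))
   \<and> (\<forall>y\<in>vecs m.
        (qform m (bssc m r M piv S b) (Emat m (\<lambda>_. 0) y) \<noteq> 0) \<longleftrightarrow>
          y \<in> colspace m (m - r) (Htil m r M piv))
   \<and> colspace m (m - r) (Htil m r M piv) = perp m H"
proof -
  interpret bsetup m r M piv using assms(2) by unfold_locales
  have sym: "\<forall>j<r. \<forall>k<r. S j k = S k j" using assms(4) .
  have P1: "(qform m (bssc m r M piv S b) (Emat m x y) \<noteq> 0) \<longleftrightarrow>
          (x \<in> H \<and> (\<exists>z\<in>vecs r. x = mvec m r M z \<and> mvec r m (mtrans M) y = mvec r r S z))"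
    if x: "x \<in> vecs m" and y: "y \<in> vecs m" for x y
    unfolding NZ[OF sym x y] assms(3) RHS_iff[OF x] ..
  have P2: "(qform m (bssc m r M piv S b) (Emat m x y) \<noteq> 0) \<longleftrightarrow>
          (x \<in> H \<and> (\<exists>z\<in>vecs r. x = mvec m r M z \<and>
                y \<in> {vadd (mvec m (m - r) (Htil m r M piv) v) (mvec m r (IImat m r piv) (mvec r r S z))
                      | v. v \<in> vecs (m - r)}))"
    if x: "x \<in> vecs m" and y: "y \<in> vecs m" for x y
  proof -
    have "(mvec r m (mtrans M) y = mvec r r S z) \<longleftrightarrow>
       y \<in> {vadd (mvec m (m - r) (Htil m r M piv) v) (mvec m r (IImat m r piv) (mvec r r S z)) | v. v \<in> vecs (m - r)}"
      for z using KL[OF y mvec_in[of r r S z]] by blast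
    then show ?thesis unfolding P1[OF x y] by blast
  qed
  have P3: "(qform m (bssc m r M piv S b) (Emat m (\<lambda>_. 0) y) \<noteq> 0) \<longleftrightarrow>
          y \<in> colspace m (m - r) (Htil m r M piv)" if y: "y \<in> vecs m" for y
  proof -
    have "(qform m (bssc m r M piv S b) (Emat m (\<lambda>_. 0) y) \<noteq> 0) \<longleftrightarrow> mvec r m (mtrans M) y = (\<lambda>_. 0)"
      unfolding NZ[OF sym zero_vecs y] by (simp add: mvec_zero zero_vecs)
    also have "\<dots> \<longleftrightarrow> y \<in> colspace m (m - r) (Htil m r M piv)"
      using KL[OF y zero_vecs] by (auto simp: mvec_zero vadd_zero colspace_def)
    finally show ?thesis .
  qed
  have P4: "colspace m (m - r) (Htil m r M piv) = perp m H"
  proof (rule set_eqI)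
    fix y
    show "y \<in> colspace m (m - r) (Htil m r M piv) \<longleftrightarrow> y \<in> perp m H"
    proof
      assume "y \<in> colspace m (m - r) (Htil m r M piv)"
      then obtain v where v: "v \<in> vecs (m - r)" "y = mvec m (m - r) (Htil m r M piv) v"
        by (auto simp: colspace_def)
      then have "mvec r m (mtrans M) y = (\<lambda>_. 0)"
        using KL[OF mvec_in zero_vecs] by (auto simp: mvec_zero vadd_zero)
      then show "y \<in> perp m H" using v unfolding assms(3) perp_iff by simp
    next
      assume "y \<in> perp m H"
      then have "y \<in> vecs m" "mvec r m (mtrans M) y = (\<lambda>_. 0)" unfolding assms(3) perp_iff by auto
      then show "y \<in> colspace m (m - r) (Htil m r M piv)"
        using KL[of y "\<lambda>_. 0"] by (auto simp: mvec_zero vadd_zero colspace_def zero_vecs)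
    qed
  qed
  show ?thesis using P1 P2 P3 P4 by blast
qed

end
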